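(* Let $h:\mathbb{R}\to(0,1)$ be continuous and let $B^{(h)}$ be the normalized multifractional Brownian motion with function $h$. For every $n\ge1$, every pairwise distinct $t_1,\dots,t_n\in\mathbb{R}\setminus\{0\}$ and every $(\beta_1,\dots,\beta_n)\in\mathbb{R}^n$, if $\sum_{j=1}^n\beta_jB^{(h)}(t_j)=0$ almost surely, then $\beta_1=\dots=\beta_n=0$.
   Context: For $x\in(0,1)$, $c_x:=\big(2\pi/(\Gamma(2x+1)\sin(\pi x))\big)^{1/2}$. The normalized multifractional Brownian motion with continuous function $h:\mathbb{R}\to(0,1)$ is the centered Gaussian process with covariance $R_h(t,s)=\frac{c^2_{h_{t,s}}}{c_{h(t)}c_{h(s)}}\cdot\frac12\big(|t|^{2h_{t,s}}+|s|^{2h_{t,s}}-|t-s|^{2h_{t,s}}\big)$, where $h_{t,s}=(h(t)+h(s))/2$. Equivalently, $B^{(h)}(t)=\int_{\mathbb{R}}\frac{e^{itu}-1}{c_{h(t)}|u|^{h(t)+1/2}}\widetilde W(du)$ for a complex Gaussian random measure $\widetilde W$ associated with a standard white noise. *)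

theory Defs
  imports "HOL-Probability.Probability"
begin

definition c_mbm :: "real \<Rightarrow> real" where
  "c_mbm x = sqrt (2 * pi / (Gamma (2 * x + 1) * sin (pi * x)))"

definition R_mbm :: "(real \<Rightarrow> real) \<Rightarrow> real \<Rightarrow> real \<Rightarrow> real" where
  "R_mbm h t s =
     (let H = (h t + h s) / 2
      in (c_mbm H)\<^sup>2 / (c_mbm (h t) * c_mbm (h s)) * (1/2) *
         (\<bar>t\<bar> powr (2 * H) + \<bar>s\<bar> powr (2 * H) - \<bar>t - s\<bar> powr (2 * H)))"

definition centered_gaussian_process ::
  "'a measure \<Rightarrow> (real \<Rightarrow> 'a \<Rightarrow> real) \<Rightarrow> (real \<Rightarrow> real \<Rightarrow> real) \<Rightarrow> bool" where
  "centered_gaussian_process M X K \<longleftrightarrow>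
     prob_space M \<and> (\<forall>t. X t \<in> borel_measurable M) \<and>
     (\<forall>(I::real set) (c::real \<Rightarrow> real). finite I \<longrightarrow>
        (let Y = (\<lambda>\<omega>. \<Sum>t\<in>I. c t * X t \<omega>);
             v = (\<Sum>s\<in>I. \<Sum>t\<in>I. c s * c t * K s t)
         in (0 < v \<and> distributed M lborel Y (normal_density 0 (sqrt v))) \<or>
            (v = 0 \<and> (AE \<omega> in M. Y \<omega> = 0))))"

definition normalized_mbm :: "'a measure \<Rightarrow> (real \<Rightarrow> real) \<Rightarrow> (real \<Rightarrow> 'a \<Rightarrow> real) \<Rightarrow> bool" where
  "normalized_mbm M h X \<longleftrightarrow> centered_gaussian_process M X (R_mbm h)"

end

theory Submission
  imports Defs
begin


lemma gamma_scaled: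
  fixes u b :: real
  assumes u: "u > 0" and b: "b > 0"
  shows "(\<integral>\<^sup>+x. ennreal (indicator {0..} x * x powr (b-1) * exp (-(u*x))) \<partial>lborel)
         = ennreal (Gamma b * u powr (-b))"
proof -
  have "ennreal (Gamma b) = (\<integral>\<^sup>+t. ennreal (indicator {0..} t * t powr (b - 1) / exp t) \<partial>lborel)"
    using Gamma_conv_nn_integral_real[OF b] by simp
  also have "\<dots> = ennreal \<bar>u\<bar> * (\<integral>\<^sup>+x. ennreal (indicator {0..} (0 + u*x) * (0 + u*x) powr (b - 1) / exp (0 + u*x)) \<partial>lborel)"
    by (rule nn_integral_real_affine) (use u in auto)
  also have "\<dots> = ennreal u * (\<integral>\<^sup>+x. ennreal (u powr (b-1)) * ennreal (indicator {0..} x * x powr (b-1) * exp (-(u*x))) \<partial>lborel)"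
    using u by (intro arg_cong2[where f="(*)"] nn_integral_cong)
      (auto simp: indicator_def ennreal_mult'[symmetric] powr_mult exp_minus field_simps zero_le_mult_iff)
  also have "\<dots> = ennreal (u * u powr (b-1)) * (\<integral>\<^sup>+x. ennreal (indicator {0..} x * x powr (b-1) * exp (-(u*x))) \<partial>lborel)"
    using u by (subst nn_integral_cmult) (auto simp: ennreal_mult' mult.assoc)
  finally have eq: "ennreal (Gamma b) = ennreal (u powr b) * (\<integral>\<^sup>+x. ennreal (indicator {0..} x * x powr (b-1) * exp (-(u*x))) \<partial>lborel)"
    using u by (simp add: powr_mult_base)
  have "ennreal (Gamma b * u powr (-b)) = ennreal (Gamma b) * ennreal (u powr (-b))"
    using Gamma_real_pos[OF b] by (simp add: ennreal_mult)
  also have "\<dots> = (ennreal (u powr b) * ennreal (u powr (-b))) * (\<integral>\<^sup>+x. ennreal (indicator {0..} x * x powr (b-1) * exp (-(u*x))) \<partial>lborel)"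
    by (subst eq) (simp add: mult_ac)
  also have "ennreal (u powr b) * ennreal (u powr (-b)) = 1"
    using u by (simp add: ennreal_mult[symmetric] powr_add[symmetric])
  finally show ?thesis by simp
qed



lemma exp_neg_at_top: "x > 0 \<Longrightarrow> ((\<lambda>u::real. exp (-(x*u))) \<longlongrightarrow> 0) at_top"
  by (intro filterlim_compose[OF exp_at_bot] filterlim_compose[OF filterlim_uminus_at_bot_at_top]
       filterlim_tendsto_pos_mult_at_top[OF tendsto_const] filterlim_ident) auto

lemma laplace_one_minus_cos:
  fixes x :: real assumes x: "x > 0"
  shows "(\<integral>\<^sup>+u. ennreal (indicator {0..} u * ((1 - cos u) * exp (-(x*u)))) \<partial>lborel)
       = ennreal (1 / (x * (1 + x\<^sup>2)))"
proof -
  define F where "F u = - exp (-(x*u)) / x - exp (-(x*u)) * (sin u - x * cos u) / (1 + x\<^sup>2)" for u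
  have pos: "1 + x\<^sup>2 > 0" by (simp add: add_pos_nonneg)
  have "(\<integral>\<^sup>+u. ennreal (indicator {0..} u * ((1 - cos u) * exp (-(x*u)))) \<partial>lborel)
      = (\<integral>\<^sup>+u. ennreal ((1 - cos u) * exp (-(x*u))) * indicator {0..} u \<partial>lborel)"
    by (intro nn_integral_cong) (auto simp: indicator_def)
  also have "\<dots> = ennreal (0 - F 0)"
  proof (rule nn_integral_FTC_atLeast)
    show "(\<lambda>u. (1 - cos u) * exp (-(x*u))) \<in> borel_measurable borel" by measurable
    show "0 \<le> (1 - cos u) * exp (-(x*u))" for u by simp
    show "(F has_real_derivative (1 - cos u) * exp (-(x*u))) (at u)" for u
    proof -
      have "(F has_real_derivative
         (x * exp (-(x*u)) / x - ((- x * exp (-(x*u))) * (sin u - x * cos u) + exp (-(x*u)) * (cos u + x * sin u)) / (1 + x\<^sup>2))) (at u)"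
        unfolding F_def using pos by (auto intro!: derivative_eq_intros)
      moreover have "x * exp (-(x*u)) / x - ((- x * exp (-(x*u))) * (sin u - x * cos u) + exp (-(x*u)) * (cos u + x * sin u)) / (1 + x\<^sup>2)
          = (1 - cos u) * exp (-(x*u))"
        using x pos by (simp add: field_simps power2_eq_square)
      ultimately show ?thesis by (simp only:)
    qed
    show "(F \<longlongrightarrow> 0) at_top"
    proof (rule Lim_null_comparison)
      show "\<forall>\<^sub>F u in at_top. norm (F u) \<le> exp (-(x*u)) * (1/x + (1 + x) / (1 + x\<^sup>2))"
      proof (intro always_eventually allI)
        fix u
        have c1: "\<bar>x * cos u\<bar> \<le> x" using x abs_cos_le_one[of u]
          by (simp add: abs_mult mult_left_le)
        have "\<bar>sin u - x * cos u\<bar> \<le> \<bar>sin u\<bar> + \<bar>x * cos u\<bar>" by (rule abs_triangle_ineq4)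
        hence s1: "\<bar>sin u - x * cos u\<bar> \<le> 1 + x" using c1 abs_sin_le_one[of u] by linarith
        have e0: "exp (-(x*u)) > 0" by simp
        have "\<bar>exp (-(x*u)) * (sin u - x * cos u) / (1 + x\<^sup>2)\<bar> = exp (-(x*u)) * (\<bar>sin u - x * cos u\<bar> / (1 + x\<^sup>2))"
          using pos by (simp add: abs_mult)
        also have "\<dots> \<le> exp (-(x*u)) * ((1 + x) / (1 + x\<^sup>2))"
          using pos s1 e0 by (intro mult_left_mono divide_right_mono) auto
        finally have A: "\<bar>exp (-(x*u)) * (sin u - x * cos u) / (1 + x\<^sup>2)\<bar> \<le> exp (-(x*u)) * ((1 + x) / (1 + x\<^sup>2))" .
        have B: "\<bar>- exp (-(x*u)) / x\<bar> = exp (-(x*u)) * (1/x)" using x by simp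
        have "norm (F u) \<le> \<bar>- exp (-(x*u)) / x\<bar> + \<bar>exp (-(x*u)) * (sin u - x * cos u) / (1 + x\<^sup>2)\<bar>"
          unfolding F_def real_norm_def by (rule abs_triangle_ineq4)
        also have "\<dots> \<le> exp (-(x*u)) * (1/x) + exp (-(x*u)) * ((1 + x) / (1 + x\<^sup>2))"
          using A B by linarith
        finally show "norm (F u) \<le> exp (-(x*u)) * (1/x + (1 + x) / (1 + x\<^sup>2))"
          by (simp add: distrib_left)
      qed
      show "((\<lambda>u. exp (-(x*u)) * (1/x + (1 + x) / (1 + x\<^sup>2))) \<longlongrightarrow> 0) at_top"
        using tendsto_mult_left_zero[OF exp_neg_at_top[OF x]] by simp
    qed
  qed
  also have "0 - F 0 = 1 / (x * (1 + x\<^sup>2))"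
    unfolding F_def using x pos by (simp add: field_simps power2_eq_square)
  finally show ?thesis .
qed



lemma nn_integral_atLeast_SUP:
  fixes h :: "real \<Rightarrow> ennreal" and b :: "nat \<Rightarrow> real"
  assumes [measurable]: "h \<in> borel_measurable borel" and inc: "incseq b" and unb: "\<And>x. \<exists>n. x \<le> b n"
  shows "(\<integral>\<^sup>+x. h x * indicator {0..} x \<partial>lborel) = (SUP n. \<integral>\<^sup>+x. h x * indicator {0..b n} x \<partial>lborel)"
proof -
  have "(\<integral>\<^sup>+x. h x * indicator {0..} x \<partial>lborel) = (\<integral>\<^sup>+x. (SUP n. h x * indicator {0..b n} x) \<partial>lborel)"
  proof (intro nn_integral_cong)
    fix x :: real
    show "h x * indicator {0..} x = (SUP n. h x * indicator {0..b n} x)"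
    proof (rule antisym)
      obtain n where n: "x \<le> b n" using unb by blast
      have "h x * indicator {0..} x = h x * indicator {0..b n} x"
        using n by (auto simp: indicator_def)
      also have "\<dots> \<le> (SUP n. h x * indicator {0..b n} x)" by (rule SUP_upper) simp
      finally show "h x * indicator {0..} x \<le> (SUP n. h x * indicator {0..b n} x)" .
      show "(SUP n. h x * indicator {0..b n} x) \<le> h x * indicator {0..} x"
        by (rule SUP_least) (auto simp: indicator_def)
    qed
  qed
  also have "\<dots> = (SUP n. \<integral>\<^sup>+x. h x * indicator {0..b n} x \<partial>lborel)"
  proof (rule nn_integral_monotone_convergence_SUP)
    show "incseq (\<lambda>n x. h x * indicator {0..b n} x)"
      using inc by (auto simp: incseq_def le_fun_def indicator_def intro: order_trans)
  qed simp
  finally show ?thesis .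
qed

lemma nn_integral_square_subst:
  fixes f :: "real \<Rightarrow> real"
  assumes [measurable]: "f \<in> borel_measurable borel"
  shows "(\<integral>\<^sup>+x. ennreal (f x) * indicator {0..} x \<partial>lborel)
       = (\<integral>\<^sup>+y. ennreal (f (y\<^sup>2) * (2 * y)) * indicator {0..} y \<partial>lborel)"
proof -
  have "(\<integral>\<^sup>+x. ennreal (f x) * indicator {0..} x \<partial>lborel)
      = (SUP n. \<integral>\<^sup>+x. ennreal (f x) * indicator {0..(real n)\<^sup>2} x \<partial>lborel)"
  proof (rule nn_integral_atLeast_SUP)
    show "incseq (\<lambda>n. (real n)\<^sup>2)" by (auto simp: incseq_def power_mono)
    fix x :: real obtain n where "x \<le> real n" using real_arch_simple by blast
    moreover have "real n \<le> (real n)\<^sup>2" by (cases n) (auto simp: power2_eq_square)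
    ultimately show "\<exists>n. x \<le> (real n)\<^sup>2" by (meson order_trans)
  qed simp
  also have "\<dots> = (SUP n. \<integral>\<^sup>+y. ennreal (f (y\<^sup>2) * (2 * y)) * indicator {0..real n} y \<partial>lborel)"
  proof (intro SUP_cong refl)
    fix n :: nat
    note sub = nn_integral_substitution[where g="\<lambda>y. y\<^sup>2" and g'="\<lambda>y. 2 * y" and a=0 and b="real n" and f=f]
    have sub0: "(\<integral>\<^sup>+x. ennreal (f x * indicator {(0::real)\<^sup>2..(real n)\<^sup>2} x) \<partial>lborel)
        = (\<integral>\<^sup>+x. ennreal (f (x\<^sup>2) * (2*x) * indicator {0..real n} x) \<partial>lborel)"
    proof (rule sub)
      show "set_borel_measurable borel {(0::real)\<^sup>2..(real n)\<^sup>2} f" unfolding set_borel_measurable_def by measurable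
      show "((\<lambda>y. y\<^sup>2) has_real_derivative 2 * x) (at x)" for x :: real
        using DERIV_pow[of 2 x] by simp
    qed (auto intro!: continuous_intros)
    have sub': "(\<integral>\<^sup>+x. ennreal (f x * indicator {0..(real n)\<^sup>2} x) \<partial>lborel)
        = (\<integral>\<^sup>+x. ennreal (f (x\<^sup>2) * (2*x) * indicator {0..real n} x) \<partial>lborel)"
      using sub0 by simp
    have "(\<integral>\<^sup>+x. ennreal (f x) * indicator {0..(real n)\<^sup>2} x \<partial>lborel)
        = (\<integral>\<^sup>+x. ennreal (f x * indicator {0..(real n)\<^sup>2} x) \<partial>lborel)"
      by (intro nn_integral_cong) (auto simp: indicator_def)
    also have "\<dots> = (\<integral>\<^sup>+x. ennreal (f (x\<^sup>2) * (2*x) * indicator {0..real n} x) \<partial>lborel)" by (fact sub')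
    also have "\<dots> = (\<integral>\<^sup>+y. ennreal (f (y\<^sup>2) * (2 * y)) * indicator {0..real n} y \<partial>lborel)"
      by (intro nn_integral_cong) (auto simp: indicator_def)
    finally show "(\<integral>\<^sup>+x. ennreal (f x) * indicator {0..(real n)\<^sup>2} x \<partial>lborel)
        = (\<integral>\<^sup>+y. ennreal (f (y\<^sup>2) * (2 * y)) * indicator {0..real n} y \<partial>lborel)" .
  qed
  also have "\<dots> = (\<integral>\<^sup>+y. ennreal (f (y\<^sup>2) * (2 * y)) * indicator {0..} y \<partial>lborel)"
  proof (rule nn_integral_atLeast_SUP[symmetric])
    show "incseq (\<lambda>n. real n)" by (auto simp: incseq_def)
    show "\<exists>n. x \<le> real n" for x :: real using real_arch_simple by blast
  qed simp
  finally show ?thesis .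
qed



lemma nn_integral_exp_neg:
  fixes c :: real assumes c: "c > 0"
  shows "(\<integral>\<^sup>+r. ennreal (indicator {0..} r * exp (-(c*r))) \<partial>lborel) = ennreal (1/c)"
proof -
  have "(\<integral>\<^sup>+r. ennreal (indicator {0..} r * exp (-(c*r))) \<partial>lborel)
      = (\<integral>\<^sup>+r. ennreal (exp (-(c*r))) * indicator {0..} r \<partial>lborel)"
    by (intro nn_integral_cong) (auto simp: indicator_def)
  also have "\<dots> = ennreal (0 - (- exp (-(c*0)) / c))"
  proof (rule nn_integral_FTC_atLeast)
    show "((\<lambda>r. - exp (-(c*r)) / c) has_real_derivative exp (-(c*r))) (at r)" for r
      using c by (auto intro!: derivative_eq_intros)
    show "((\<lambda>r. - exp (-(c*r)) / c) \<longlongrightarrow> 0) at_top"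
      using tendsto_divide[OF tendsto_minus[OF exp_neg_at_top[OF c]] tendsto_const[of c]] c by simp
  qed auto
  finally show ?thesis by simp
qed

lemma Gamma_reflection_real:
  fixes b :: real
  shows "Gamma b * Gamma (1 - b) = pi / sin (pi * b)"
proof -
  have "complex_of_real (Gamma b * Gamma (1 - b)) = Gamma (complex_of_real b) * Gamma (1 - complex_of_real b)"
    using Gamma_complex_of_real[of "1-b"] by (simp add: Gamma_complex_of_real)
  also have "\<dots> = of_real pi / sin (of_real pi * of_real b)" by (rule Gamma_reflection_complex)
  also have "\<dots> = complex_of_real (pi / sin (pi * b))" by (simp add: sin_of_real[symmetric] of_real_mult[symmetric] del: of_real_mult)
  finally show ?thesis by (simp only: of_real_eq_iff)
qed

lemma J2_integral:
  fixes b :: real assumes b0: "0 < b" and b1: "b < 1"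
  shows "(\<integral>\<^sup>+y. ennreal (indicator {0..} y * y powr (b-1) / (1+y)) \<partial>lborel) = ennreal (pi / sin (pi * b))"
proof -
  have "(\<integral>\<^sup>+y. ennreal (indicator {0..} y * y powr (b-1) / (1+y)) \<partial>lborel)
      = (\<integral>\<^sup>+y. ennreal (indicator {0..} y * y powr (b-1)) *
             (\<integral>\<^sup>+r. ennreal (indicator {0..} r * exp (-((1+y)*r))) \<partial>lborel) \<partial>lborel)"
  proof (intro nn_integral_cong)
    fix y :: real
    show "ennreal (indicator {0..} y * y powr (b-1) / (1+y)) = ennreal (indicator {0..} y * y powr (b-1)) *
             (\<integral>\<^sup>+r. ennreal (indicator {0..} r * exp (-((1+y)*r))) \<partial>lborel)"
    proof (cases "y \<ge> 0")
      case True
      thus ?thesis by (subst nn_integral_exp_neg) (auto simp: ennreal_mult'[symmetric] divide_simps)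
    qed (simp add: indicator_def)
  qed
  also have "\<dots> = (\<integral>\<^sup>+y. \<integral>\<^sup>+r. ennreal (indicator {0..} y * y powr (b-1) * (indicator {0..} r * exp (-r) * exp (-(r*y)))) \<partial>lborel \<partial>lborel)"
    by (subst nn_integral_cmult[symmetric])
       (auto intro!: nn_integral_cong simp: ennreal_mult'[symmetric] indicator_def exp_add[symmetric] exp_diff exp_minus field_simps)
  also have "\<dots> = (\<integral>\<^sup>+r. \<integral>\<^sup>+y. ennreal (indicator {0..} y * y powr (b-1) * (indicator {0..} r * exp (-r) * exp (-(r*y)))) \<partial>lborel \<partial>lborel)"
    by (subst lborel_pair.Fubini') (auto simp: case_prod_unfold)
  also have "\<dots> = (\<integral>\<^sup>+r. ennreal (indicator {0..} r * exp (-r)) * (\<integral>\<^sup>+y. ennreal (indicator {0..} y * y powr (b-1) * exp (-(r*y))) \<partial>lborel) \<partial>lborel)"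
    by (subst nn_integral_cmult[symmetric])
       (auto intro!: nn_integral_cong simp: ennreal_mult'[symmetric] indicator_def algebra_simps)
  also have "\<dots> = (\<integral>\<^sup>+r. ennreal (Gamma b) * ennreal (indicator {0..} r * r powr ((1-b)-1) / exp r) \<partial>lborel)"
  proof (intro nn_integral_cong_AE eventually_mono[OF AE_lborel_singleton[of 0]] impI)
    fix r :: real assume r: "r \<noteq> 0"
    show "ennreal (indicator {0..} r * exp (-r)) * (\<integral>\<^sup>+y. ennreal (indicator {0..} y * y powr (b-1) * exp (-(r*y))) \<partial>lborel)
        = ennreal (Gamma b) * ennreal (indicator {0..} r * r powr ((1-b)-1) / exp r)"
    proof (cases "r > 0")
      case True
      have G: "Gamma b > 0" using b0 by (rule Gamma_real_pos)
      show ?thesis using True G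
        by (subst gamma_scaled[OF True b0])
           (simp add: ennreal_mult'[symmetric] exp_minus field_simps)
    next
      case False thus ?thesis using r by (simp add: indicator_def)
    qed
  qed
  also have "\<dots> = ennreal (Gamma b) * ennreal (Gamma (1-b))"
    using b1 by (subst nn_integral_cmult) (auto simp: Gamma_conv_nn_integral_real)
  also have "\<dots> = ennreal (pi / sin (pi * b))"
    using b0 b1 by (simp add: ennreal_mult'[symmetric] Gamma_reflection_real Gamma_real_pos less_imp_le)
  finally show ?thesis .
qed



lemma J_integral:
  fixes a :: real assumes a0: "0 < a" and a2: "a < 2"
  shows "(\<integral>\<^sup>+x. ennreal (indicator {0..} x * x powr (a-1) / (1+x\<^sup>2)) \<partial>lborel) = ennreal (pi / (2 * sin (pi * a / 2)))"
proof -
  define f where "f y = indicator {0..} y * y powr (a/2-1) / (1+y)" for y :: real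
  have sp: "sin (pi * (a/2)) > 0" using a0 a2 by (intro sin_gt_zero) auto
  have "ennreal (pi / sin (pi * (a/2))) = (\<integral>\<^sup>+y. ennreal (f y) \<partial>lborel)"
    unfolding f_def using a0 a2 by (subst J2_integral) auto
  also have "\<dots> = (\<integral>\<^sup>+y. ennreal (f y) * indicator {0..} y \<partial>lborel)"
    by (intro nn_integral_cong) (auto simp: f_def indicator_def)
  also have "\<dots> = (\<integral>\<^sup>+x. ennreal (f (x\<^sup>2) * (2 * x)) * indicator {0..} x \<partial>lborel)"
    by (rule nn_integral_square_subst) (unfold f_def, measurable)
  also have "\<dots> = (\<integral>\<^sup>+x. 2 * ennreal (indicator {0..} x * x powr (a-1) / (1+x\<^sup>2)) \<partial>lborel)"
  proof (intro nn_integral_cong)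
    fix x :: real
    show "ennreal (f (x\<^sup>2) * (2 * x)) * indicator {0..} x = 2 * ennreal (indicator {0..} x * x powr (a-1) / (1+x\<^sup>2))"
    proof (cases "x > 0")
      case True
      have x2: "x\<^sup>2 = x powr 2" using True by (simp add: powr_numeral)
      have "(x\<^sup>2) powr (a/2-1) = x powr (a-2)" unfolding x2 powr_powr by (simp add: algebra_simps)
      moreover have e: "x powr (a-2) * x powr 1 = x powr (a-1)" by (subst powr_add[symmetric]) simp
      ultimately have "(x\<^sup>2) powr (a/2-1) * x = x powr (a-1)" using True by simp
      hence "f (x\<^sup>2) * (2 * x) = 2 * (indicator {0..} x * x powr (a-1) / (1+x\<^sup>2))"
        using True unfolding f_def by (simp add: indicator_def field_simps)
      moreover have "ennreal (2 * (x powr (a - 1) / (1 + x\<^sup>2))) = 2 * ennreal (x powr (a - 1) / (1 + x\<^sup>2))"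
        by (subst ennreal_mult') simp_all
      ultimately show ?thesis using True by (simp add: indicator_def)
    next
      case False thus ?thesis by (cases "x = 0") (auto simp: indicator_def f_def)
    qed
  qed
  also have "\<dots> = 2 * (\<integral>\<^sup>+x. ennreal (indicator {0..} x * x powr (a-1) / (1+x\<^sup>2)) \<partial>lborel)"
    by (rule nn_integral_cmult) simp
  finally have "ennreal (pi / sin (pi * (a/2))) = 2 * (\<integral>\<^sup>+x. ennreal (indicator {0..} x * x powr (a-1) / (1+x\<^sup>2)) \<partial>lborel)" .
  moreover have "ennreal (pi / sin (pi * (a/2))) = 2 * ennreal (pi / (2 * sin (pi * a / 2)))"
  proof -
    have "pi / sin (pi * (a/2)) = 2 * (pi / (2 * sin (pi * a / 2)))" using sp by (simp add: field_simps)
    hence "ennreal (pi / sin (pi * (a/2))) = ennreal (2 * (pi / (2 * sin (pi * a / 2))))"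
      by (rule arg_cong[where f=ennreal])
    also have "\<dots> = 2 * ennreal (pi / (2 * sin (pi * a / 2)))" by (subst ennreal_mult') simp_all
    finally show ?thesis .
  qed
  ultimately have "2 * (\<integral>\<^sup>+x. ennreal (indicator {0..} x * x powr (a-1) / (1+x\<^sup>2)) \<partial>lborel) = 2 * ennreal (pi / (2 * sin (pi * a / 2)))"
    by simp
  thus ?thesis by (subst (asm) ennreal_mult_cancel_left) auto
qed



lemma powr_minus1_times: "(x::real) > 0 \<Longrightarrow> x powr (c-1) * x = x powr c"
proof -
  assume x: "x > 0"
  have "x powr (c-1) * x powr 1 = x powr c" by (subst powr_add[symmetric]) simp
  thus ?thesis using x by simp
qed

lemma N_integral:
  fixes a :: real assumes a0: "0 < a" and a2: "a < 2"
  shows "(\<integral>\<^sup>+u. ennreal (indicator {0..} u * ((1 - cos u) * u powr (-a-1))) \<partial>lborel)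
       = ennreal (pi / (2 * Gamma (a+1) * sin (pi * a / 2)))"
proof -
  define G where "G = Gamma (a+1)"
  have G: "G > 0" unfolding G_def using a0 by (intro Gamma_real_pos) simp
  have sp: "sin (pi * a / 2) > 0" using a0 a2 by (intro sin_gt_zero) auto
  have "(\<integral>\<^sup>+u. ennreal (indicator {0..} u * ((1 - cos u) * u powr (-a-1))) \<partial>lborel)
      = (\<integral>\<^sup>+u. ennreal (1/G) * ennreal (indicator {0..} u * (1 - cos u)) *
            (\<integral>\<^sup>+x. ennreal (indicator {0..} x * x powr ((a+1)-1) * exp (-(u*x))) \<partial>lborel) \<partial>lborel)"
  proof (intro nn_integral_cong)
    fix u :: real
    show "ennreal (indicator {0..} u * ((1 - cos u) * u powr (-a-1))) = ennreal (1/G) * ennreal (indicator {0..} u * (1 - cos u)) *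
            (\<integral>\<^sup>+x. ennreal (indicator {0..} x * x powr ((a+1)-1) * exp (-(u*x))) \<partial>lborel)"
    proof (cases "u > 0")
      case True
      have mm: "-1-a = -a-1" by simp
      have "(\<integral>\<^sup>+x. ennreal (indicator {0..} x * x powr ((a+1)-1) * exp (-(u*x))) \<partial>lborel) = ennreal (G * u powr (-(a+1)))"
        unfolding G_def using True a0 by (intro gamma_scaled) auto
      moreover have "ennreal (indicator {0..} u * ((1 - cos u) * u powr (-a-1))) = ennreal (1/G) * ennreal (indicator {0..} u * (1 - cos u)) *
            ennreal (G * u powr (-(a+1)))"
        using True G by (simp add: ennreal_mult'[symmetric] indicator_def field_simps) (simp add: mm)
      ultimately show ?thesis by simp
    next
      case False
      hence "indicator {0..} u * (1 - cos u) = 0" by (cases "u = 0") (auto simp: indicator_def)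
      with False show ?thesis by (cases "u = 0") (auto simp: indicator_def)
    qed
  qed
  also have "\<dots> = (\<integral>\<^sup>+u. \<integral>\<^sup>+x. ennreal (1/G) * ennreal (indicator {0..} x * x powr a * (indicator {0..} u * ((1 - cos u) * exp (-(x*u))))) \<partial>lborel \<partial>lborel)"
    by (subst nn_integral_cmult[symmetric])
       (auto intro!: nn_integral_cong simp: ennreal_mult'[symmetric] indicator_def mult_ac)
  also have "\<dots> = (\<integral>\<^sup>+x. \<integral>\<^sup>+u. ennreal (1/G) * ennreal (indicator {0..} x * x powr a * (indicator {0..} u * ((1 - cos u) * exp (-(x*u))))) \<partial>lborel \<partial>lborel)"
    by (subst lborel_pair.Fubini') (auto simp: case_prod_unfold)
  also have "\<dots> = (\<integral>\<^sup>+x. ennreal (1/G) * ennreal (indicator {0..} x * x powr a) *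
                 (\<integral>\<^sup>+u. ennreal (indicator {0..} u * ((1 - cos u) * exp (-(x*u)))) \<partial>lborel) \<partial>lborel)"
    by (subst nn_integral_cmult[symmetric])
       (auto intro!: nn_integral_cong simp: ennreal_mult'[symmetric] indicator_def mult_ac)
  also have "\<dots> = (\<integral>\<^sup>+x. ennreal (1/G) * ennreal (indicator {0..} x * x powr (a-1) / (1+x\<^sup>2)) \<partial>lborel)"
  proof (intro nn_integral_cong)
    fix x :: real
    show "ennreal (1/G) * ennreal (indicator {0..} x * x powr a) *
                 (\<integral>\<^sup>+u. ennreal (indicator {0..} u * ((1 - cos u) * exp (-(x*u)))) \<partial>lborel)
        = ennreal (1/G) * ennreal (indicator {0..} x * x powr (a-1) / (1+x\<^sup>2))"
    proof (cases "x > 0")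
      case True
      have pos: "1 + x\<^sup>2 > 0" by (simp add: add_pos_nonneg)
      have e: "x powr a = x powr (a-1) * x" using powr_minus1_times[OF True, of a] by simp
      have "ennreal (indicator {0..} x * x powr a) * ennreal (1 / (x * (1 + x\<^sup>2))) = ennreal (indicator {0..} x * x powr (a-1) / (1+x\<^sup>2))"
      proof -
        have r: "x powr a * (1 / (x * (1 + x\<^sup>2))) = x powr (a-1) / (1+x\<^sup>2)"
        proof -
          have g: "p * x * (1 / (x * (1 + x\<^sup>2))) = p / (1+x\<^sup>2)" for p using True pos by simp
          show ?thesis by (subst e) (rule g)
        qed
        have "ennreal (indicator {0..} x * x powr a) * ennreal (1 / (x * (1 + x\<^sup>2))) = ennreal (x powr a * (1 / (x * (1 + x\<^sup>2))))"
          using True by (simp add: ennreal_mult'[symmetric] indicator_def)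
        also have "\<dots> = ennreal (x powr (a-1) / (1+x\<^sup>2))" by (simp only: r)
        also have "\<dots> = ennreal (indicator {0..} x * x powr (a-1) / (1+x\<^sup>2))" using True by (simp add: indicator_def)
        finally show ?thesis .
      qed
      thus ?thesis using True by (simp add: laplace_one_minus_cos mult.assoc)
    next
      case False thus ?thesis using a0 by (cases "x = 0") (auto simp: indicator_def)
    qed
  qed
  also have "\<dots> = ennreal (1/G) * ennreal (pi / (2 * sin (pi * a / 2)))"
    using a0 a2 by (subst nn_integral_cmult) (auto simp: J_integral)
  also have "\<dots> = ennreal (pi / (2 * Gamma (a+1) * sin (pi * a / 2)))"
    using G sp by (subst ennreal_mult'[symmetric]) (auto simp: G_def field_simps)
  finally show ?thesis .
qed



definition Cst :: "real \<Rightarrow> real" where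
  "Cst a = pi / (Gamma (a+1) * sin (pi * a / 2))"

lemma Cst_pos: "0 < a \<Longrightarrow> a < 2 \<Longrightarrow> Cst a > 0"
  unfolding Cst_def by (intro divide_pos_pos mult_pos_pos Gamma_real_pos sin_gt_zero) auto

lemma base_line_integral:
  fixes a :: real assumes a0: "0 < a" and a2: "a < 2"
  shows "(\<integral>\<^sup>+u. ennreal ((1 - cos u) * \<bar>u\<bar> powr (-a-1)) \<partial>lborel) = ennreal (Cst a)"
proof -
  define g where "g u = (1 - cos u) * \<bar>u\<bar> powr (-a-1)" for u :: real
  have g0: "g u \<ge> 0" for u unfolding g_def by simp
  have geven: "g (-u) = g u" for u unfolding g_def by simp
  have gz: "g 0 = 0" unfolding g_def by simp
  have [measurable]: "g \<in> borel_measurable borel" unfolding g_def by measurable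
  have "(\<integral>\<^sup>+u. ennreal (g u) \<partial>lborel) = (\<integral>\<^sup>+u. ennreal (indicator {0..} u * g u) + ennreal (indicator {..<0} u * g u) \<partial>lborel)"
    by (intro nn_integral_cong) (auto simp: indicator_def)
  also have "\<dots> = (\<integral>\<^sup>+u. ennreal (indicator {0..} u * g u) \<partial>lborel) + (\<integral>\<^sup>+u. ennreal (indicator {..<0} u * g u) \<partial>lborel)"
    by (rule nn_integral_add) auto
  also have "(\<integral>\<^sup>+u. ennreal (indicator {..<0} u * g u) \<partial>lborel) = ennreal \<bar>-1\<bar> * (\<integral>\<^sup>+u. ennreal (indicator {..<0} (0 + (-1) * u) * g (0 + (-1) * u)) \<partial>lborel)"
    by (rule nn_integral_real_affine) auto
  also have "\<dots> = (\<integral>\<^sup>+u. ennreal (indicator {0..} u * g u) \<partial>lborel)"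
    by (auto intro!: nn_integral_cong simp: indicator_def geven gz)
  also have "(\<integral>\<^sup>+u. ennreal (indicator {0..} u * g u) \<partial>lborel) = ennreal (pi / (2 * Gamma (a+1) * sin (pi * a / 2)))"
  proof -
    have "(\<integral>\<^sup>+u. ennreal (indicator {0..} u * g u) \<partial>lborel) = (\<integral>\<^sup>+u. ennreal (indicator {0..} u * ((1 - cos u) * u powr (-a-1))) \<partial>lborel)"
      by (intro nn_integral_cong) (auto simp: indicator_def g_def)
    thus ?thesis using N_integral[OF a0 a2] by simp
  qed
  also have "ennreal (pi / (2 * Gamma (a+1) * sin (pi * a / 2))) + ennreal (pi / (2 * Gamma (a+1) * sin (pi * a / 2))) = ennreal (Cst a)"
  proof -
    have "Cst a = pi / (2 * Gamma (a+1) * sin (pi * a / 2)) + pi / (2 * Gamma (a+1) * sin (pi * a / 2))"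
      unfolding Cst_def by (simp add: field_simps)
    moreover have "pi / (2 * Gamma (a+1) * sin (pi * a / 2)) \<ge> 0"
      using a0 a2 by (intro divide_nonneg_pos mult_pos_pos Gamma_real_pos sin_gt_zero) auto
    ultimately show ?thesis by (simp add: ennreal_plus[symmetric] del: ennreal_plus)
  qed
  finally show ?thesis unfolding g_def .
qed

lemma line_integral:
  fixes a x :: real assumes a0: "0 < a" and a2: "a < 2"
  shows "(\<integral>\<^sup>+u. ennreal ((1 - cos (x*u)) * \<bar>u\<bar> powr (-a-1)) \<partial>lborel) = ennreal (Cst a * \<bar>x\<bar> powr a)"
proof (cases "x = 0")
  case True thus ?thesis by simp
next
  case False
  define g where "g u = (1 - cos u) * \<bar>u\<bar> powr (-a-1)" for u :: real
  have [measurable]: "g \<in> borel_measurable borel" unfolding g_def by measurable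
  have ax: "\<bar>x\<bar> > 0" using False by simp
  have "ennreal (Cst a) = (\<integral>\<^sup>+u. ennreal (g u) \<partial>lborel)"
    unfolding g_def by (rule base_line_integral[OF a0 a2, symmetric])
  also have "\<dots> = ennreal \<bar>x\<bar> * (\<integral>\<^sup>+u. ennreal (g (0 + x * u)) \<partial>lborel)"
    by (rule nn_integral_real_affine) (use False in auto)
  also have "\<dots> = ennreal \<bar>x\<bar> * (\<integral>\<^sup>+u. ennreal (\<bar>x\<bar> powr (-a-1)) * ennreal ((1 - cos (x*u)) * \<bar>u\<bar> powr (-a-1)) \<partial>lborel)"
    by (auto intro!: nn_integral_cong simp: g_def ennreal_mult'[symmetric] abs_mult powr_mult mult_ac)
  also have "\<dots> = ennreal (\<bar>x\<bar> * \<bar>x\<bar> powr (-a-1)) * (\<integral>\<^sup>+u. ennreal ((1 - cos (x*u)) * \<bar>u\<bar> powr (-a-1)) \<partial>lborel)"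
    by (subst nn_integral_cmult) (auto simp: ennreal_mult' mult.assoc)
  also have "\<bar>x\<bar> * \<bar>x\<bar> powr (-a-1) = \<bar>x\<bar> powr (-a)"
    using powr_minus1_times[OF ax, of "-a"] by (simp add: mult.commute)
  finally have eq: "ennreal (Cst a) = ennreal (\<bar>x\<bar> powr (-a)) * (\<integral>\<^sup>+u. ennreal ((1 - cos (x*u)) * \<bar>u\<bar> powr (-a-1)) \<partial>lborel)" .
  have "ennreal (Cst a * \<bar>x\<bar> powr a) = ennreal (\<bar>x\<bar> powr a) * ennreal (Cst a)"
    using Cst_pos[OF a0 a2] by (simp add: ennreal_mult'[symmetric] mult.commute)
  also have "\<dots> = ennreal (\<bar>x\<bar> powr a * \<bar>x\<bar> powr (-a)) * (\<integral>\<^sup>+u. ennreal ((1 - cos (x*u)) * \<bar>u\<bar> powr (-a-1)) \<partial>lborel)"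
    by (subst eq) (simp add: ennreal_mult' mult.assoc)
  also have "\<bar>x\<bar> powr a * \<bar>x\<bar> powr (-a) = 1" using ax by (simp add: powr_add[symmetric])
  finally show ?thesis by simp
qed



lemma cis_ne_1:
  fixes x :: real assumes "x \<noteq> 0" "\<bar>x\<bar> < 2 * pi"
  shows "exp (\<i> * complex_of_real x) \<noteq> 1"
proof
  assume "exp (\<i> * complex_of_real x) = 1"
  then obtain n :: int where n: "x = 2 * pi * of_int n"
    by (auto simp: exp_eq_1)
  with assms have "n \<noteq> 0" by auto
  hence "\<bar>of_int n\<bar> \<ge> (1::real)" by linarith
  hence "\<bar>x\<bar> \<ge> 2 * pi" using n pi_gt_zero by (simp add: abs_mult)
  with assms show False by simp
qed

lemma freq_independent:
  fixes F :: "real set"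
  assumes "finite F"
  shows "\<And>c :: real \<Rightarrow> complex. ((\<lambda>u. \<Sum>\<omega>\<in>F. c \<omega> * exp (\<i> * complex_of_real (\<omega> * u))) \<longlongrightarrow> 0) at_top \<Longrightarrow> \<forall>\<omega>\<in>F. c \<omega> = 0"
  using assms
proof (induction F rule: finite_induct)
  case empty thus ?case by simp
next
  case (insert w0 F)
  define E where "E \<omega> u = exp (\<i> * complex_of_real (\<omega> * u))" for \<omega> u :: real
  define Q where "Q u = (\<Sum>\<omega>\<in>insert w0 F. c \<omega> * E \<omega> u)" for u
  have Qlim: "(Q \<longlongrightarrow> 0) at_top" using insert.prems unfolding Q_def E_def .
  define d where "d = pi / (1 + (\<Sum>\<omega>\<in>F. \<bar>\<omega> - w0\<bar>))"
  have S0: "(\<Sum>\<omega>\<in>F. \<bar>\<omega> - w0\<bar>) \<ge> 0" by (intro sum_nonneg) auto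
  have S1: "1 + (\<Sum>\<omega>\<in>F. \<bar>\<omega> - w0\<bar>) > 0" using S0 by linarith
  have d0: "d > 0" unfolding d_def using S1 by simp
  have Eshift: "E \<omega> (u + d) = E \<omega> d * E \<omega> u" for \<omega> u
    unfolding E_def by (simp add: distrib_left exp_add[symmetric] algebra_simps)
  have key: "Q (u + d) - E w0 d * Q u = (\<Sum>\<omega>\<in>F. (c \<omega> * (E \<omega> d - E w0 d)) * E \<omega> u)" for u
  proof -
    have q1: "Q (u+d) = c w0 * (E w0 d * E w0 u) + (\<Sum>\<omega>\<in>F. c \<omega> * (E \<omega> d * E \<omega> u))"
      unfolding Q_def using insert.hyps by (simp add: Eshift)
    have q2: "E w0 d * Q u = c w0 * (E w0 d * E w0 u) + (\<Sum>\<omega>\<in>F. c \<omega> * (E w0 d * E \<omega> u))"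
      unfolding Q_def using insert.hyps by (simp add: sum_distrib_left distrib_left mult_ac)
    have "Q (u + d) - E w0 d * Q u = (\<Sum>\<omega>\<in>F. c \<omega> * (E \<omega> d * E \<omega> u)) - (\<Sum>\<omega>\<in>F. c \<omega> * (E w0 d * E \<omega> u))"
      using q1 q2 by simp
    also have "\<dots> = (\<Sum>\<omega>\<in>F. c \<omega> * (E \<omega> d * E \<omega> u) - c \<omega> * (E w0 d * E \<omega> u))"
      by (simp add: sum_subtractf)
    also have "\<dots> = (\<Sum>\<omega>\<in>F. (c \<omega> * (E \<omega> d - E w0 d)) * E \<omega> u)"
      by (intro sum.cong) (auto simp: algebra_simps)
    finally show ?thesis .
  qed
  have lim2: "((\<lambda>u. Q (u + d) - E w0 d * Q u) \<longlongrightarrow> 0) at_top"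
  proof -
    have "((\<lambda>u. Q (u + d)) \<longlongrightarrow> 0) at_top"
      by (rule filterlim_compose[OF Qlim])
         (use filterlim_tendsto_add_at_top[OF tendsto_const[of d] filterlim_ident] in \<open>simp add: add.commute\<close>)
    from tendsto_diff[OF this tendsto_mult[OF tendsto_const Qlim]] show ?thesis by simp
  qed
  hence "((\<lambda>u. \<Sum>\<omega>\<in>F. (c \<omega> * (E \<omega> d - E w0 d)) * E \<omega> u) \<longlongrightarrow> 0) at_top"
    by (simp only: key)
  hence "((\<lambda>u. \<Sum>\<omega>\<in>F. (c \<omega> * (E \<omega> d - E w0 d)) * exp (\<i> * complex_of_real (\<omega> * u))) \<longlongrightarrow> 0) at_top"
    by (simp only: E_def)
  hence IH: "\<forall>\<omega>\<in>F. c \<omega> * (E \<omega> d - E w0 d) = 0" by (rule insert.IH)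
  have cF: "c \<omega> = 0" if w: "\<omega> \<in> F" for \<omega>
  proof -
    have ne: "\<omega> \<noteq> w0" using w insert.hyps by auto
    have "\<bar>\<omega> - w0\<bar> \<le> (\<Sum>\<omega>\<in>F. \<bar>\<omega> - w0\<bar>)"
      using w insert.hyps(1) by (intro member_le_sum) auto
    hence "\<bar>\<omega> - w0\<bar> < 1 + (\<Sum>\<omega>\<in>F. \<bar>\<omega> - w0\<bar>)" by linarith
    hence q: "\<bar>\<omega> - w0\<bar> / (1 + (\<Sum>\<omega>\<in>F. \<bar>\<omega> - w0\<bar>)) < 1" using S1 by simp
    have "\<bar>\<omega> - w0\<bar> * d = pi * (\<bar>\<omega> - w0\<bar> / (1 + (\<Sum>\<omega>\<in>F. \<bar>\<omega> - w0\<bar>)))"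
      unfolding d_def by simp
    also have "\<dots> < pi * 1" using q pi_gt_zero by (intro mult_strict_left_mono) auto
    finally have "\<bar>\<omega> - w0\<bar> * d < pi" by simp
    hence lt: "\<bar>(\<omega> - w0) * d\<bar> < 2 * pi" using d0 pi_gt_zero by (simp add: abs_mult) (use pi_gt_zero in linarith)
    have nz: "(\<omega> - w0) * d \<noteq> 0" using ne d0 by simp
    have "E (\<omega> - w0) d \<noteq> 1" unfolding E_def by (rule cis_ne_1[OF nz lt])
    moreover have "E \<omega> d = E (\<omega> - w0) d * E w0 d"
      unfolding E_def by (simp add: exp_add[symmetric] algebra_simps)
    ultimately have "E \<omega> d - E w0 d \<noteq> 0" unfolding E_def by auto
    with IH w show ?thesis by auto
  qed
  have "Q u = c w0 * E w0 u" for u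
    unfolding Q_def using insert.hyps cF by simp
  hence "((\<lambda>u. norm (c w0 * E w0 u)) \<longlongrightarrow> 0) at_top"
    using tendsto_norm[OF Qlim] by simp
  moreover have "norm (c w0 * E w0 u) = norm (c w0)" for u
    unfolding E_def by (simp add: norm_mult)
  ultimately have "((\<lambda>u. norm (c w0)) \<longlongrightarrow> 0) (at_top :: real filter)" by simp
  hence "norm (c w0) = 0" by (simp add: tendsto_const_iff)
  with cF show ?case by auto
qed



lemma norm_cis_minus_1: "norm (exp (\<i> * complex_of_real x) - 1) \<le> 2"
proof -
  have "norm (exp (\<i> * complex_of_real x) - 1) \<le> norm (exp (\<i> * complex_of_real x)) + norm (1::complex)"
    by (rule norm_triangle_ineq4)
  thus ?thesis by simp
qed

lemma lin_indep:
  fixes J :: "nat set" and t hh b :: "nat \<Rightarrow> real"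
  assumes fin: "finite J" and inj: "inj_on t J" and tnz: "\<forall>j\<in>J. t j \<noteq> 0"
    and Z: "\<And>u. u > 0 \<Longrightarrow> (\<Sum>j\<in>J. complex_of_real (b j) * (exp (\<i> * complex_of_real (t j * u)) - 1) * complex_of_real (u powr (- hh j))) = 0"
  shows "\<forall>j\<in>J. b j = 0"
proof (rule ccontr)
  assume "\<not> (\<forall>j\<in>J. b j = 0)"
  define S where "S = {j\<in>J. b j \<noteq> 0}"
  have Sne: "S \<noteq> {}" and finS: "finite S" and SJ: "S \<subseteq> J"
    using \<open>\<not> (\<forall>j\<in>J. b j = 0)\<close> fin unfolding S_def by auto
  define \<alpha> where "\<alpha> = Min (hh ` S)"
  have \<alpha>_le: "\<alpha> \<le> hh j" if "j \<in> S" for j unfolding \<alpha>_def using that finS by auto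
  obtain j0 where j0: "j0 \<in> S" "hh j0 = \<alpha>"
    unfolding \<alpha>_def using finS Sne by (metis (no_types, lifting) Min_in empty_is_image finite_imageI imageE)
  define G where "G = {j\<in>S. hh j = \<alpha>}"
  have finG: "finite G" and GS: "G \<subseteq> S" using finS unfolding G_def by auto
  have j0G: "j0 \<in> G" using j0 unfolding G_def by auto
  define e where "e j u = exp (\<i> * complex_of_real (t j * u))" for j u
  define Q where "Q u = (\<Sum>j\<in>G. complex_of_real (b j) * (e j u - 1))" for u
  define Rm where "Rm u = (\<Sum>j\<in>S - G. complex_of_real (b j) * (e j u - 1) * complex_of_real (u powr (\<alpha> - hh j)))" for u
  have QR: "Q u = - Rm u" if u: "u > 0" for u
  proof -
    have "0 = complex_of_real (u powr \<alpha>) * (\<Sum>j\<in>J. complex_of_real (b j) * (e j u - 1) * complex_of_real (u powr (- hh j)))"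
      using Z[OF u] unfolding e_def by simp
    also have "\<dots> = (\<Sum>j\<in>J. complex_of_real (b j) * (e j u - 1) * complex_of_real (u powr (\<alpha> - hh j)))"
      unfolding sum_distrib_left using u
      by (intro sum.cong refl) (simp add: powr_add[symmetric] of_real_mult[symmetric] mult_ac del: of_real_mult)
    also have "\<dots> = (\<Sum>j\<in>S. complex_of_real (b j) * (e j u - 1) * complex_of_real (u powr (\<alpha> - hh j)))"
      using SJ fin by (intro sum.mono_neutral_right) (auto simp: S_def)
    also have "\<dots> = (\<Sum>j\<in>G. complex_of_real (b j) * (e j u - 1) * complex_of_real (u powr (\<alpha> - hh j))) + Rm u"
      unfolding Rm_def using GS finS by (subst sum.subset_diff[of G S]) auto
    also have "(\<Sum>j\<in>G. complex_of_real (b j) * (e j u - 1) * complex_of_real (u powr (\<alpha> - hh j))) = Q u"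
      unfolding Q_def using u by (intro sum.cong refl) (auto simp: G_def)
    finally show ?thesis by (simp add: eq_neg_iff_add_eq_0 add.commute)
  qed
  have Rlim: "(Rm \<longlongrightarrow> 0) at_top"
    unfolding Rm_def
  proof (rule tendsto_null_sum)
    fix j assume j: "j \<in> S - G"
    have lt: "\<alpha> - hh j < 0" using j \<alpha>_le[of j] unfolding G_def by auto
    show "((\<lambda>u. complex_of_real (b j) * (e j u - 1) * complex_of_real (u powr (\<alpha> - hh j))) \<longlongrightarrow> 0) at_top"
    proof (rule Lim_null_comparison)
      show "\<forall>\<^sub>F u in at_top. norm (complex_of_real (b j) * (e j u - 1) * complex_of_real (u powr (\<alpha> - hh j))) \<le> 2 * \<bar>b j\<bar> * u powr (\<alpha> - hh j)"
      proof (intro always_eventually allI)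
        fix u :: real
        have "norm (complex_of_real (b j) * (e j u - 1) * complex_of_real (u powr (\<alpha> - hh j)))
            = \<bar>b j\<bar> * norm (e j u - 1) * u powr (\<alpha> - hh j)" by (simp add: norm_mult)
        also have "\<dots> \<le> \<bar>b j\<bar> * 2 * u powr (\<alpha> - hh j)"
          unfolding e_def by (intro mult_right_mono mult_left_mono norm_cis_minus_1) auto
        finally show "norm (complex_of_real (b j) * (e j u - 1) * complex_of_real (u powr (\<alpha> - hh j))) \<le> 2 * \<bar>b j\<bar> * u powr (\<alpha> - hh j)"
          by (simp add: mult_ac)
      qed
      show "((\<lambda>u. 2 * \<bar>b j\<bar> * u powr (\<alpha> - hh j)) \<longlongrightarrow> 0) at_top"
        using tendsto_mult_right_zero[OF tendsto_neg_powr[OF lt filterlim_ident]] by simp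
    qed
  qed
  have Qlim: "(Q \<longlongrightarrow> 0) at_top"
  proof -
    have "((\<lambda>u. - Rm u) \<longlongrightarrow> 0) at_top" using tendsto_minus[OF Rlim] by simp
    moreover have "\<forall>\<^sub>F u in at_top. - Rm u = Q u"
      using eventually_gt_at_top[of 0] by eventually_elim (simp add: QR)
    ultimately show ?thesis by (rule Lim_transform_eventually)
  qed
  define F where "F = insert 0 (t ` G)"
  define c where "c \<omega> = (if \<omega> = 0 then - complex_of_real (\<Sum>j\<in>G. b j) else complex_of_real (b (the_inv_into G t \<omega>)))" for \<omega>
  have injG: "inj_on t G" using inj GS SJ by (meson inj_on_subset order_trans)
  have tG0: "0 \<notin> t ` G" using tnz GS SJ by auto
  have ct: "c (t j) = complex_of_real (b j)" if "j \<in> G" for j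
    using that tnz GS SJ injG unfolding c_def by (auto simp: the_inv_into_f_f)
  have QF: "Q u = (\<Sum>\<omega>\<in>F. c \<omega> * exp (\<i> * complex_of_real (\<omega> * u)))" for u
  proof -
    have "(\<Sum>\<omega>\<in>F. c \<omega> * exp (\<i> * complex_of_real (\<omega> * u))) = c 0 + (\<Sum>\<omega>\<in>t ` G. c \<omega> * exp (\<i> * complex_of_real (\<omega> * u)))"
      unfolding F_def using tG0 finG by (subst sum.insert) auto
    also have "(\<Sum>\<omega>\<in>t ` G. c \<omega> * exp (\<i> * complex_of_real (\<omega> * u))) = (\<Sum>j\<in>G. complex_of_real (b j) * e j u)"
      by (subst sum.reindex[OF injG]) (auto intro!: sum.cong simp: ct e_def)
    finally show ?thesis
      unfolding Q_def c_def by (simp add: algebra_simps sum_subtractf)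
  qed
  have "\<forall>\<omega>\<in>F. c \<omega> = 0"
  proof (rule freq_independent)
    show "finite F" using finG unfolding F_def by simp
    have "(\<lambda>u. \<Sum>\<omega>\<in>F. c \<omega> * exp (\<i> * complex_of_real (\<omega> * u))) = Q"
      by (rule ext, rule QF[symmetric])
    thus "((\<lambda>u. \<Sum>\<omega>\<in>F. c \<omega> * exp (\<i> * complex_of_real (\<omega> * u))) \<longlongrightarrow> 0) at_top"
      using Qlim by simp
  qed
  hence "c (t j0) = 0" unfolding F_def using j0G by auto
  hence "b j0 = 0" using ct[OF j0G] by simp
  with j0 show False unfolding S_def by auto
qed



lemma line_bochner:
  fixes a x :: real assumes a0: "0 < a" and a2: "a < 2"
  shows "has_bochner_integral lborel (\<lambda>u. (1 - cos (x*u)) * \<bar>u\<bar> powr (-a-1)) (Cst a * \<bar>x\<bar> powr a)"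
proof (rule has_bochner_integral_nn_integral)
  show "(\<lambda>u. (1 - cos (x*u)) * \<bar>u\<bar> powr (-a-1)) \<in> borel_measurable lborel" by measurable
  show "AE u in lborel. 0 \<le> (1 - cos (x*u)) * \<bar>u\<bar> powr (-a-1)" by simp
  show "0 \<le> Cst a * \<bar>x\<bar> powr a" using Cst_pos[OF a0 a2] by simp
  show "(\<integral>\<^sup>+u. ennreal ((1 - cos (x*u)) * \<bar>u\<bar> powr (-a-1)) \<partial>lborel) = ennreal (Cst a * \<bar>x\<bar> powr a)"
    by (rule line_integral[OF a0 a2])
qed

lemma pair_bochner:
  fixes a x y :: real assumes a0: "0 < a" and a2: "a < 2"
  shows "has_bochner_integral lborel (\<lambda>u. (cos ((x - y)*u) - cos (x*u) - cos (y*u) + 1) * \<bar>u\<bar> powr (-a-1))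
           (Cst a * (\<bar>x\<bar> powr a + \<bar>y\<bar> powr a - \<bar>x - y\<bar> powr a))"
proof -
  have "has_bochner_integral lborel (\<lambda>u. (1 - cos (x*u)) * \<bar>u\<bar> powr (-a-1) + (1 - cos (y*u)) * \<bar>u\<bar> powr (-a-1) - (1 - cos ((x-y)*u)) * \<bar>u\<bar> powr (-a-1))
           (Cst a * \<bar>x\<bar> powr a + Cst a * \<bar>y\<bar> powr a - Cst a * \<bar>x - y\<bar> powr a)"
    by (intro has_bochner_integral_diff has_bochner_integral_add line_bochner a0 a2)
  moreover have "(\<lambda>u. (1 - cos (x*u)) * \<bar>u\<bar> powr (-a-1) + (1 - cos (y*u)) * \<bar>u\<bar> powr (-a-1) - (1 - cos ((x-y)*u)) * \<bar>u\<bar> powr (-a-1))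
     = (\<lambda>u. (cos ((x - y)*u) - cos (x*u) - cos (y*u) + 1) * \<bar>u\<bar> powr (-a-1))"
    by (rule ext) (simp add: algebra_simps)
  ultimately show ?thesis by (simp add: algebra_simps)
qed

lemma c_mbm_pos: "0 < x \<Longrightarrow> x < 1 \<Longrightarrow> c_mbm x > 0"
  unfolding c_mbm_def
  by (intro real_sqrt_gt_zero divide_pos_pos mult_pos_pos Gamma_real_pos sin_gt_zero) auto

lemma c_mbm_sq: "0 < x \<Longrightarrow> x < 1 \<Longrightarrow> (c_mbm x)\<^sup>2 = 2 * Cst (2 * x)"
proof -
  assume x: "0 < x" "x < 1"
  have "2 * pi / (Gamma (2 * x + 1) * sin (pi * x)) > 0"
    using x by (intro divide_pos_pos mult_pos_pos Gamma_real_pos sin_gt_zero) auto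
  thus ?thesis unfolding c_mbm_def Cst_def by (simp add: mult.commute)
qed

lemma R_mbm_eq:
  assumes h: "\<forall>x. 0 < h x \<and> h x < 1"
  shows "R_mbm h s r = Cst (h s + h r) * (\<bar>s\<bar> powr (h s + h r) + \<bar>r\<bar> powr (h s + h r) - \<bar>s - r\<bar> powr (h s + h r))
                        / (c_mbm (h s) * c_mbm (h r))"
proof -
  define H where "H = (h s + h r) / 2"
  have H: "0 < H" "H < 1" using h[rule_format, of s] h[rule_format, of r] unfolding H_def by auto
  have "2 * H = h s + h r" unfolding H_def by simp
  thus ?thesis unfolding R_mbm_def Let_def H_def[symmetric] using c_mbm_sq[OF H]
    by (simp add: field_simps)
qed



lemma AE_zero_open_interval:
  fixes f :: "real \<Rightarrow> real"
  assumes AE: "AE u in lborel. f u = 0" and cont: "isCont f u0" and nz: "f u0 \<noteq> 0"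
  shows False
proof -
  obtain e where e: "e > 0" "\<And>y. dist u0 y < e \<Longrightarrow> f y \<noteq> 0"
    using continuous_at_avoid[OF cont nz] by blast
  from AE obtain N where N: "{u. \<not> f u = 0} \<subseteq> N" "N \<in> sets lborel" "emeasure lborel N = 0"
    by (auto elim!: AE_E)
  have "{u0 - e<..<u0 + e} \<subseteq> N"
  proof
    fix y assume "y \<in> {u0 - e<..<u0 + e}"
    hence "dist u0 y < e" by (auto simp: dist_real_def)
    thus "y \<in> N" using e N(1) by auto
  qed
  hence "emeasure lborel {u0 - e<..<u0 + e} \<le> emeasure lborel N"
    using N(2) by (intro emeasure_mono) auto
  moreover have "emeasure lborel {u0 - e<..<u0 + e} = ennreal (2 * e)" using e by simp
  ultimately show False using N(3) e by simp
qed

lemma quad_pos: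
  fixes J :: "nat set" and t \<beta> :: "nat \<Rightarrow> real" and h :: "real \<Rightarrow> real"
  assumes fin: "finite J" and inj: "inj_on t J" and tnz: "\<forall>j\<in>J. t j \<noteq> 0"
    and h: "\<forall>x. 0 < h x \<and> h x < 1" and nz: "\<exists>j\<in>J. \<beta> j \<noteq> 0"
  shows "(\<Sum>j\<in>J. \<Sum>k\<in>J. \<beta> j * \<beta> k * R_mbm h (t j) (t k)) > 0"
proof -
  define hj where "hj j = h (t j)" for j
  define cc where "cc j = c_mbm (hj j)" for j
  define b where "b j = \<beta> j / cc j" for j
  have hj: "0 < hj j" "hj j < 1" for j unfolding hj_def using h by auto
  have cc: "cc j > 0" for j unfolding cc_def using hj by (intro c_mbm_pos)
  define p where "p j u = \<bar>u\<bar> powr (- hj j - 1/2)" for j u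
  define A where "A u = (\<Sum>j\<in>J. b j * (cos (t j * u) - 1) * p j u)" for u
  define B where "B u = (\<Sum>j\<in>J. b j * sin (t j * u) * p j u)" for u
  define K where "K j k u = (cos ((t j - t k)*u) - cos (t j*u) - cos (t k*u) + 1) * \<bar>u\<bar> powr (-(hj j + hj k)-1)" for j k u
  define V where "V j k = Cst (hj j + hj k) * (\<bar>t j\<bar> powr (hj j + hj k) + \<bar>t k\<bar> powr (hj j + hj k) - \<bar>t j - t k\<bar> powr (hj j + hj k))" for j k
  define v where "v = (\<Sum>j\<in>J. \<Sum>k\<in>J. \<beta> j * \<beta> k * R_mbm h (t j) (t k))"
  have Rjk: "\<beta> j * \<beta> k * R_mbm h (t j) (t k) = b j * b k * V j k" for j k
    unfolding R_mbm_eq[OF h] b_def V_def hj_def[symmetric] cc_def[symmetric] using cc[of j] cc[of k]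
    by (simp add: field_simps)
  have Kint: "has_bochner_integral lborel (K j k) (V j k)" for j k
    unfolding K_def V_def using hj[of j] hj[of k] by (intro pair_bochner) auto
  have vint: "has_bochner_integral lborel (\<lambda>u. \<Sum>j\<in>J. \<Sum>k\<in>J. b j * b k * K j k u) v"
  proof -
    have "has_bochner_integral lborel (\<lambda>u. \<Sum>j\<in>J. \<Sum>k\<in>J. b j * b k * K j k u) (\<Sum>j\<in>J. \<Sum>k\<in>J. b j * b k * V j k)"
      by (intro has_bochner_integral_sum ballI has_bochner_integral_mult_right Kint)
    thus ?thesis unfolding v_def Rjk .
  qed
  have pp: "p j u * p k u = \<bar>u\<bar> powr (-(hj j + hj k)-1)" for j k u
    unfolding p_def by (simp add: powr_add[symmetric] algebra_simps)
  have ptw: "(\<Sum>j\<in>J. \<Sum>k\<in>J. b j * b k * K j k u) = (A u)\<^sup>2 + (B u)\<^sup>2" for u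
  proof -
    have "(A u)\<^sup>2 + (B u)\<^sup>2 = (\<Sum>j\<in>J. \<Sum>k\<in>J. (b j * (cos (t j * u) - 1) * p j u) * (b k * (cos (t k * u) - 1) * p k u))
         + (\<Sum>j\<in>J. \<Sum>k\<in>J. (b j * sin (t j * u) * p j u) * (b k * sin (t k * u) * p k u))"
      unfolding A_def B_def power2_eq_square sum_product ..
    also have "\<dots> = (\<Sum>j\<in>J. \<Sum>k\<in>J. (b j * (cos (t j * u) - 1) * p j u) * (b k * (cos (t k * u) - 1) * p k u)
                    + (b j * sin (t j * u) * p j u) * (b k * sin (t k * u) * p k u))"
      by (simp add: sum.distrib)
    also have "\<dots> = (\<Sum>j\<in>J. \<Sum>k\<in>J. b j * b k * K j k u)"
    proof (intro sum.cong refl)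
      fix j k
      have "cos ((t j - t k) * u) = cos (t j * u) * cos (t k * u) + sin (t j * u) * sin (t k * u)"
        by (simp add: left_diff_distrib cos_diff)
      hence "b j * b k * K j k u = b j * b k * ((cos (t j * u) - 1) * (cos (t k * u) - 1) + sin (t j * u) * sin (t k * u)) * (p j u * p k u)"
        unfolding K_def pp by (simp add: algebra_simps)
      thus "(b j * (cos (t j * u) - 1) * p j u) * (b k * (cos (t k * u) - 1) * p k u)
                    + (b j * sin (t j * u) * p j u) * (b k * sin (t k * u) * p k u) = b j * b k * K j k u"
        by (simp add: algebra_simps)
    qed
    finally show ?thesis by simp
  qed
  have vint2: "has_bochner_integral lborel (\<lambda>u. (A u)\<^sup>2 + (B u)\<^sup>2) v"
    using vint unfolding ptw .
  have v0: "v \<ge> 0"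
  proof -
    have "0 \<le> integral\<^sup>L lborel (\<lambda>u. (A u)\<^sup>2 + (B u)\<^sup>2)" by (rule integral_nonneg_AE) simp
    thus ?thesis using has_bochner_integral_integral_eq[OF vint2] by simp
  qed
  show ?thesis
  proof (rule ccontr)
    assume "\<not> (\<Sum>j\<in>J. \<Sum>k\<in>J. \<beta> j * \<beta> k * R_mbm h (t j) (t k)) > 0"
    hence v00: "v = 0" using v0 unfolding v_def by simp
    have integ: "integrable lborel (\<lambda>u. (A u)\<^sup>2 + (B u)\<^sup>2)" using vint2 by (simp add: has_bochner_integral_iff)
    have "integral\<^sup>L lborel (\<lambda>u. (A u)\<^sup>2 + (B u)\<^sup>2) = 0"
      using has_bochner_integral_integral_eq[OF vint2] v00 by simp
    hence AE0: "AE u in lborel. (A u)\<^sup>2 + (B u)\<^sup>2 = 0"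
      using integral_nonneg_eq_0_iff_AE[OF integ] by simp
    have contp: "isCont (p j) u" if "u > 0" for j u
    proof -
      have "continuous_on {0<..} (p j)"
        unfolding p_def by (intro continuous_intros) auto
      thus ?thesis using that by (simp add: continuous_on_eq_continuous_at)
    qed
    have zero: "A u = 0 \<and> B u = 0" if u: "u > 0" for u
    proof -
      have "isCont (\<lambda>u. (A u)\<^sup>2 + (B u)\<^sup>2) u"
        unfolding A_def B_def using contp[OF u] by (intro continuous_intros) auto
      hence "(A u)\<^sup>2 + (B u)\<^sup>2 = 0"
        using AE_zero_open_interval[OF AE0] by blast
      thus ?thesis by (simp add: add_nonneg_eq_0_iff)
    qed
    have Z: "(\<Sum>j\<in>J. complex_of_real (b j) * (exp (\<i> * complex_of_real (t j * u)) - 1) * complex_of_real (u powr (- (hj j + 1/2)))) = 0"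
      if u: "u > 0" for u
    proof -
      have trm: "complex_of_real (b j) * (exp (\<i> * complex_of_real (t j * u)) - 1) * complex_of_real (u powr (- (hj j + 1/2)))
          = complex_of_real (b j * (cos (t j * u) - 1) * p j u) + \<i> * complex_of_real (b j * sin (t j * u) * p j u)" for j
      proof -
        have "exp (\<i> * complex_of_real (t j * u)) = complex_of_real (cos (t j * u)) + \<i> * complex_of_real (sin (t j * u))"
          by (simp add: exp_Euler cos_of_real[symmetric] sin_of_real[symmetric] of_real_mult[symmetric] del: of_real_mult)
        moreover have "p j u = u powr (- (hj j + 1/2))" unfolding p_def using u by simp
        ultimately show ?thesis by (simp add: algebra_simps)
      qed
      have "(\<Sum>j\<in>J. complex_of_real (b j) * (exp (\<i> * complex_of_real (t j * u)) - 1) * complex_of_real (u powr (- (hj j + 1/2))))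
          = complex_of_real (A u) + \<i> * complex_of_real (B u)"
        unfolding trm A_def B_def by (simp add: sum.distrib sum_distrib_left)
      thus ?thesis using zero[OF u] by simp
    qed
    have "\<forall>j\<in>J. b j = 0"
      by (rule lin_indep[OF fin inj tnz, where hh = "\<lambda>j. hj j + 1/2"]) (use Z in simp)
    hence "\<forall>j\<in>J. \<beta> j = 0" unfolding b_def using cc by (metis divide_eq_0_iff less_irrefl)
    with nz show False by auto
  qed
qed



theorem mainTheorem4:
  fixes h :: "real \<Rightarrow> real" and M :: "'a measure" and X :: "real \<Rightarrow> 'a \<Rightarrow> real"
    and n :: nat and t :: "nat \<Rightarrow> real" and \<beta> :: "nat \<Rightarrow> real"
  assumes "continuous_on UNIV h"
    and "\<forall>x. 0 < h x \<and> h x < 1"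
    and "normalized_mbm M h X"
    and "n \<ge> 1"
    and "inj_on t {1..n}"
    and "\<forall>j\<in>{1..n}. t j \<noteq> 0"
    and "AE \<omega> in M. (\<Sum>j=1..n. \<beta> j * X (t j) \<omega>) = 0"
  shows "\<forall>j\<in>{1..n}. \<beta> j = 0"
proof (rule ccontr)
  assume contra: "\<not> (\<forall>j\<in>{1..n}. \<beta> j = 0)"
  note h = assms(2) and inj = assms(5) and tnz = assms(6) and AE0 = assms(7)
  have G: "centered_gaussian_process M X (R_mbm h)" using assms(3) unfolding normalized_mbm_def .
  hence ps: "prob_space M" and Xm: "\<And>s. X s \<in> borel_measurable M"
    and GP: "\<And>I c. finite I \<Longrightarrow> (let Y = (\<lambda>\<omega>. \<Sum>s\<in>I. c s * X s \<omega>);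
             v = (\<Sum>s\<in>I. \<Sum>r\<in>I. c s * c r * R_mbm h s r)
         in (0 < v \<and> distributed M lborel Y (normal_density 0 (sqrt v))) \<or>
            (v = 0 \<and> (AE \<omega> in M. Y \<omega> = 0)))"
    unfolding centered_gaussian_process_def by auto
  interpret prob_space M by (rule ps)
  define I where "I = t ` {1..n}"
  define c where "c s = \<beta> (the_inv_into {1..n} t s)" for s
  have ct: "c (t j) = \<beta> j" if "j \<in> {1..n}" for j
    unfolding c_def using that inj by (simp add: the_inv_into_f_f)
  have RI: "sum g (t ` {1..n}) = sum (g \<circ> t) {1..n}" for g :: "real \<Rightarrow> real"
    by (rule sum.reindex[OF inj])
  define Y where "Y \<omega> = (\<Sum>s\<in>I. c s * X s \<omega>)" for \<omega>
  define v where "v = (\<Sum>s\<in>I. \<Sum>r\<in>I. c s * c r * R_mbm h s r)"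
  have Yeq: "Y \<omega> = (\<Sum>j=1..n. \<beta> j * X (t j) \<omega>)" for \<omega>
    unfolding Y_def I_def by (subst sum.reindex[OF inj]) (auto intro!: sum.cong simp: ct)
  have veq: "v = (\<Sum>j\<in>{1..n}. \<Sum>k\<in>{1..n}. \<beta> j * \<beta> k * R_mbm h (t j) (t k))"
  proof -
    have "v = (\<Sum>s\<in>I. \<Sum>k\<in>{1..n}. c s * \<beta> k * R_mbm h s (t k))"
      unfolding v_def I_def by (intro sum.cong refl) (simp only: RI o_def, auto intro!: sum.cong simp: ct)
    also have "\<dots> = (\<Sum>j\<in>{1..n}. \<Sum>k\<in>{1..n}. \<beta> j * \<beta> k * R_mbm h (t j) (t k))"
      unfolding I_def by (simp only: RI o_def, auto intro!: sum.cong simp: ct)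
    finally show ?thesis .
  qed
  have vpos: "v > 0" unfolding veq
    by (rule quad_pos) (use inj tnz h contra in auto)
  have "finite I" unfolding I_def by simp
  from GP[OF this, of c] vpos have dist: "distributed M lborel Y (normal_density 0 (sqrt v))"
    unfolding Let_def Y_def[symmetric] v_def[symmetric] by auto
  have Ym: "Y \<in> borel_measurable M" unfolding Y_def using Xm by measurable
  have "emeasure M (Y -` {0} \<inter> space M) = emeasure M (space M)"
  proof (rule emeasure_eq_AE)
    show "AE x in M. (x \<in> Y -` {0} \<inter> space M) = (x \<in> space M)"
      using AE0 by eventually_elim (simp add: Yeq)
    show "Y -` {0} \<inter> space M \<in> sets M" using Ym by measurable
  qed simp
  hence one: "emeasure M (Y -` {0} \<inter> space M) = 1" by (simp add: emeasure_space_1)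
  have "emeasure M (Y -` {0} \<inter> space M) = (\<integral>\<^sup>+x. ennreal (normal_density 0 (sqrt v) x) * indicator {0} x \<partial>lborel)"
    by (rule distributed_emeasure[OF dist]) simp
  also have "\<dots> = (\<integral>\<^sup>+(x::real). 0 \<partial>lborel)"
  proof (rule nn_integral_cong_AE)
    show "AE x in lborel. ennreal (normal_density 0 (sqrt v) x) * indicator {0} x = 0"
      using AE_lborel_singleton[of 0] by eventually_elim simp
  qed
  finally show False using one by simp
qed


end
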